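(* Under the assumptions and with the function $V$ defined as follows, the minimum below exists and $$V(x)=\|x\|+\min_{u\in\mathbb{R}^m}\max_{i\in\Sigma}V(A_ix+B_iu)\quad\text{for all }x\in\mathbb{R}^n.$$ Here the system is assumed IFS$_m$, and $V(x_0)=\inf_{\Psi\in\mathcal{C}_m}\sup_{\sigma\in\Sigma^\omega}\sum_{k=0}^{\infty}\|\phi(k,\sigma,x_0,\Psi)\|$, where $\mathcal{C}_m$ is the set of all functions $\mathcal{H}_-\to\mathbb{R}^m$.
   Context: Let $\Sigma$ be a finite nonempty set and $\{(A_i,B_i)\in\mathbb{R}^{n\times n}\times\mathbb{R}^{n\times m} : i\in\Sigma\}$. Consider $x(k+1)=A_{\sigma(k)}x(k)+B_{\sigma(k)}u(k)$, $k\in\mathbb{N}=\{0,1,\dots\}$, with arbitrary switching signal $\sigma:\mathbb{N}\to\Sigma$ (set of all such: $\Sigma^\omega$). $\|\cdot\|$ is the Euclidean norm. $\mathcal{H}_-$ is the set of all tuples $(x_k,\dots,x_0;\,i_{k-1},\dots,i_0)$ with $k\in\mathbb{N}$, $x_j\in\mathbb{R}^n$, $i_j\in\Sigma$ (mode string empty when $k=0$). For a function $\Psi:\mathcal{H}_-\to\mathbb{R}^m$ (a current-mode-independent controller with memory), $\phi(k,\sigma,x_0,\Psi)$ denotes the closed-loop trajectory defined by $x(0)=x_0$ and $x(k+1)=A_{\sigma(k)}x(k)+B_{\sigma(k)}\Psi(x(k),\dots,x(0);\,\sigma(k-1),\dots,\sigma(0))$. The system is IFS$_m$ if there exists such $\Psi$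 and constants $M>0,\gamma\in[0,1)$ with $\|\phi(k,\sigma,x_0,\Psi)\|\le M\gamma^k\|x_0\|$ for all $x_0\in\mathbb{R}^n,\sigma\in\Sigma^\omega,k\in\mathbb{N}$. *)

theory Defs
  imports "HOL-Analysis.Analysis" "HOL-Library.Extended_Nonnegative_Real"
begin

text \<open>A history (x_k,...,x_0; i_{k-1},...,i_0) is represented as a pair of lists
  ([x_k,...,x_0], [i_{k-1},...,i_0]); a controller with memory is a function
  Psi :: (real^'n) list => 'i list => real^'m.\<close>

definition signals :: "'i set \<Rightarrow> (nat \<Rightarrow> 'i) set" where
  "signals S = {\<sigma>. \<forall>k. \<sigma> k \<in> S}"

primrec hist ::
  "('i \<Rightarrow> real^'n^'n) \<Rightarrow> ('i \<Rightarrow> real^'m^'n) \<Rightarrow> (nat \<Rightarrow> 'i) \<Rightarrow> real^'n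
   \<Rightarrow> ((real^'n) list \<Rightarrow> 'i list \<Rightarrow> real^'m) \<Rightarrow> nat \<Rightarrow> (real^'n) list" where
  "hist A B \<sigma> x0 \<Psi> 0 = [x0]"
| "hist A B \<sigma> x0 \<Psi> (Suc k) =
     (A (\<sigma> k) *v hd (hist A B \<sigma> x0 \<Psi> k)
      + B (\<sigma> k) *v \<Psi> (hist A B \<sigma> x0 \<Psi> k) (map \<sigma> (rev [0..<k])))
     # hist A B \<sigma> x0 \<Psi> k"

definition phi ::
  "('i \<Rightarrow> real^'n^'n) \<Rightarrow> ('i \<Rightarrow> real^'m^'n) \<Rightarrow> nat \<Rightarrow> (nat \<Rightarrow> 'i) \<Rightarrow> real^'n
   \<Rightarrow> ((real^'n) list \<Rightarrow> 'i list \<Rightarrow> real^'m) \<Rightarrow> real^'n" where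
  "phi A B k \<sigma> x0 \<Psi> = hd (hist A B \<sigma> x0 \<Psi> k)"

definition IFS_m ::
  "'i set \<Rightarrow> ('i \<Rightarrow> real^'n^'n) \<Rightarrow> ('i \<Rightarrow> real^'m^'n) \<Rightarrow> bool" where
  "IFS_m S A B \<longleftrightarrow> (\<exists>(\<Psi> :: (real^'n) list \<Rightarrow> 'i list \<Rightarrow> real^'m) (M::real) (\<gamma>::real).
     M > 0 \<and> 0 \<le> \<gamma> \<and> \<gamma> < 1 \<and>
     (\<forall>x0 \<sigma> k. \<sigma> \<in> signals S \<longrightarrow> norm (phi A B k \<sigma> x0 \<Psi>) \<le> M * \<gamma> ^ k * norm x0))"

definition Vfun ::
  "'i set \<Rightarrow> ('i \<Rightarrow> real^'n^'n) \<Rightarrow> ('i \<Rightarrow> real^'m^'n) \<Rightarrow> real^'n \<Rightarrow> ennreal" where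
  "Vfun S A B x0 = (INF (\<Psi> :: (real^'n) list \<Rightarrow> 'i list \<Rightarrow> real^'m). SUP \<sigma>\<in>signals S.
      (\<Sum>k. ennreal (norm (phi A B k \<sigma> x0 \<Psi>))))"

end

theory Submission
  imports Defs
begin


lemma hist_ne: "hist A B \<sigma> x \<Psi> k \<noteq> []"
  by (cases k) auto

lemma phi_0[simp]: "phi A B 0 \<sigma> x \<Psi> = x"
  by (simp add: phi_def)

lemma phi_Suc: "phi A B (Suc k) \<sigma> x \<Psi> = A (\<sigma> k) *v phi A B k \<sigma> x \<Psi>
   + B (\<sigma> k) *v \<Psi> (hist A B \<sigma> x \<Psi> k) (map \<sigma> (rev [0..<k]))"
  by (simp add: phi_def)

lemma rev_upt_Suc: "rev [0..<Suc k] = map Suc (rev [0..<k]) @ [0]"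
proof -
  have "[0..<Suc k] = 0 # map Suc [0..<k]" by (simp add: upt_conv_Cons map_Suc_upt)
  then show ?thesis by (simp add: rev_map)
qed

lemma hist_shift:
  "hist A B \<sigma> x \<Psi> (Suc k) = hist A B (\<sigma> \<circ> Suc) (A (\<sigma> 0) *v x + B (\<sigma> 0) *v \<Psi> [x] [])
      (\<lambda>h ms. \<Psi> (h @ [x]) (ms @ [\<sigma> 0])) k @ [x]"
proof (induction k)
  case 0
  then show ?case by simp
next
  case (Suc k)
  have m: "map \<sigma> (rev [0..<Suc k]) = map (\<sigma> \<circ> Suc) (rev [0..<k]) @ [\<sigma> 0]"
    unfolding rev_upt_Suc by simp
  define H where "H = hist A B (\<sigma> \<circ> Suc) (A (\<sigma> 0) *v x + B (\<sigma> 0) *v \<Psi> [x] [])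
      (\<lambda>h ms. \<Psi> (h @ [x]) (ms @ [\<sigma> 0])) k"
  have ne: "H \<noteq> []" unfolding H_def by (rule hist_ne)
  have IH: "hist A B \<sigma> x \<Psi> (Suc k) = H @ [x]" using Suc unfolding H_def .
  show ?case
    apply (simp only: hist.simps(2)[of A B \<sigma> x \<Psi> "Suc k"] IH m)
    apply (simp only: hist.simps(2) flip: H_def)
    using ne by (simp add: hd_append)
qed

lemma phi_shift:
  "phi A B (Suc k) \<sigma> x \<Psi> = phi A B k (\<sigma> \<circ> Suc) (A (\<sigma> 0) *v x + B (\<sigma> 0) *v \<Psi> [x] [])
      (\<lambda>h ms. \<Psi> (h @ [x]) (ms @ [\<sigma> 0]))"
proof -
  have "hist A B (\<sigma> \<circ> Suc) (A (\<sigma> 0) *v x + B (\<sigma> 0) *v \<Psi> [x] [])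
      (\<lambda>h ms. \<Psi> (h @ [x]) (ms @ [\<sigma> 0])) k \<noteq> []" by (rule hist_ne)
  then show ?thesis unfolding phi_def hist_shift by (simp add: hd_append)
qed

lemma hist_cong: "(\<And>j. j < k \<Longrightarrow> \<sigma> j = \<tau> j) \<Longrightarrow> hist A B \<sigma> x \<Psi> k = hist A B \<tau> x \<Psi> k"
proof (induction k)
  case 0
  then show ?case by simp
next
  case (Suc k)
  have m: "map \<sigma> (rev [0..<k]) = map \<tau> (rev [0..<k])" using Suc.prems by simp
  have h: "hist A B \<sigma> x \<Psi> k = hist A B \<tau> x \<Psi> k" using Suc by simp
  have "\<sigma> k = \<tau> k" using Suc.prems by simp
  with m h show ?case by (simp only: hist.simps)
qed

lemma open_loop: "\<exists>G. \<forall>\<sigma> k. hist A B \<sigma> x \<Psi> k = hist A B \<sigma> x (\<lambda>h. G) k"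
proof
  define G where "G ms = \<Psi> (hist A B (\<lambda>j. rev ms ! j) x \<Psi> (length ms)) ms" for ms
  show "\<forall>\<sigma> k. hist A B \<sigma> x \<Psi> k = hist A B \<sigma> x (\<lambda>h. G) k"
  proof (intro allI)
    fix \<sigma> k show "hist A B \<sigma> x \<Psi> k = hist A B \<sigma> x (\<lambda>h. G) k"
    proof (induction k)
      case 0
      then show ?case by simp
    next
      case (Suc k)
      define ms where "ms = map \<sigma> (rev [0..<k])"
      have "hist A B (\<lambda>j. rev ms ! j) x \<Psi> k = hist A B \<sigma> x \<Psi> k"
        by (rule hist_cong) (simp add: ms_def rev_map)
      then have "G ms = \<Psi> (hist A B \<sigma> x \<Psi> k) ms" by (simp add: G_def ms_def)
      with Suc show ?case by (simp add: ms_def)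
    qed
  qed
qed

lemma open_loop_add:
  "phi A B k \<sigma> (x + y) (\<lambda>h ms. G1 ms + G2 ms) = phi A B k \<sigma> x (\<lambda>h. G1) + phi A B k \<sigma> y (\<lambda>h. G2)"
  by (induction k) (simp_all add: phi_Suc matrix_vector_right_distrib algebra_simps)



lemma cont_Max:
  fixes f :: "'i \<Rightarrow> 'a::topological_space \<Rightarrow> real"
  assumes "finite S" "S \<noteq> {}" "\<And>i. i \<in> S \<Longrightarrow> continuous_on U (f i)"
  shows "continuous_on U (\<lambda>u. Max ((\<lambda>i. f i u) ` S))"
  using assms
proof (induction S rule: finite_ne_induct)
  case (singleton x)
  then show ?case by simp
next
  case (insert x F)
  have e: "(\<lambda>u. Max ((\<lambda>i. f i u) ` insert x F)) = (\<lambda>u. max (f x u) (Max ((\<lambda>i. f i u) ` F)))"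
    using insert.hyps by (simp add: Max_insert)
  show ?case unfolding e
    by (intro continuous_on_max) (use insert in auto)
qed

lemma exists_min:
  fixes g :: "real^'m \<Rightarrow> real" and B :: "'i \<Rightarrow> real^'m^'n"
  assumes fin: "finite S"
    and cont: "continuous_on UNIV g"
    and inv: "\<And>u k. (\<forall>i\<in>S. B i *v k = 0) \<Longrightarrow> g (u + k) = g u"
    and coer: "\<And>u. (\<Sum>i\<in>S. norm (B i *v u)) \<le> a + N * g u"
    and N: "N \<ge> 0"
  shows "\<exists>u0. \<forall>u. g u0 \<le> g u"
proof -
  define K where "K = {k. \<forall>i\<in>S. B i *v k = 0}"
  have subK: "subspace K"
    unfolding subspace_def K_def by (simp add: matrix_vector_right_distrib matrix_vector_mult_scaleR)
  define P where "P = orthogonal_comp K"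
  have subP: "subspace P" unfolding P_def by (rule subspace_orthogonal_comp)
  have clP: "closed P" by (rule closed_subspace[OF subP])
  define h where "h p = (\<Sum>i\<in>S. norm (B i *v p))" for p :: "real^'m"
  have conth: "continuous_on UNIV h"
    unfolding h_def
    by (intro continuous_on_sum continuous_on_norm matrix_vector_mult_linear_continuous_on)
  have hscale: "h (c *\<^sub>R p) = \<bar>c\<bar> * h p" for c p
    unfolding h_def by (simp add: matrix_vector_mult_scaleR sum_distrib_left)
  have h0: "h p \<ge> 0" for p unfolding h_def by (simp add: sum_nonneg)
  have "\<exists>c>0. \<forall>p\<in>P. c * norm p \<le> h p"
  proof (cases "P \<inter> sphere 0 1 = {}")
    case True
    have "p = 0" if "p \<in> P" for p
    proof (rule ccontr)
      assume "p \<noteq> 0"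
      then have "(1 / norm p) *\<^sub>R p \<in> P \<inter> sphere 0 1"
        using that subspace_scale[OF subP] by auto
      with True show False by auto
    qed
    then have "\<forall>p\<in>P. 1 * norm p \<le> h p" using h0 by (metis mult_1 norm_zero)
    then show ?thesis using zero_less_one by blast
  next
    case False
    have "compact (P \<inter> sphere 0 1)" by (intro closed_Int_compact clP compact_sphere)
    then obtain p0 where p0: "p0 \<in> P \<inter> sphere 0 1" "\<And>p. p \<in> P \<inter> sphere 0 1 \<Longrightarrow> h p0 \<le> h p"
      using continuous_attains_inf[of "P \<inter> sphere 0 1" h] False continuous_on_subset[OF conth]
      by blast
    have cpos: "h p0 > 0"
    proof (rule ccontr)
      assume "\<not> h p0 > 0"
      then have "h p0 = 0" using h0[of p0] by simp
      then have "\<forall>i\<in>S. norm (B i *v p0) = 0" unfolding h_def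
        using sum_nonneg_eq_0_iff[OF fin] by (simp add: sum_nonneg_eq_0_iff[OF fin])
      then have "p0 \<in> K" unfolding K_def by simp
      then have "p0 \<in> K \<inter> P" using p0 by simp
      then have "p0 = 0" using orthogonal_Int_0[OF subK] unfolding P_def by blast
      then show False using p0 by simp
    qed
    have "h p0 * norm p \<le> h p" if "p \<in> P" for p
    proof (cases "p = 0")
      case True then show ?thesis using h0 by simp
    next
      case False
      then have "(1 / norm p) *\<^sub>R p \<in> P \<inter> sphere 0 1"
        using that subspace_scale[OF subP] by auto
      then have "h p0 \<le> h ((1 / norm p) *\<^sub>R p)" by (rule p0(2))
      also have "\<dots> = h p / norm p" using hscale by simp
      finally show ?thesis using False by (simp add: field_simps)
    qed
    then show ?thesis using cpos by blast
  qed
  then obtain c where c: "c > 0" "\<And>p. p \<in> P \<Longrightarrow> c * norm p \<le> h p" by blast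
  define R where "R = (a + N * g 0) / c"
  have "0 \<le> a + N * g 0" using coer[of 0] by simp
  then have R0: "R \<ge> 0" unfolding R_def using c by simp
  define T where "T = P \<inter> cball 0 R"
  have "compact T" unfolding T_def by (intro closed_Int_compact clP compact_cball)
  moreover have "0 \<in> T" unfolding T_def using R0 subspace_0[OF subP] by simp
  ultimately obtain p0 where p0: "p0 \<in> T" "\<And>p. p \<in> T \<Longrightarrow> g p0 \<le> g p"
    using continuous_attains_inf[of T g] continuous_on_subset[OF cont] by blast
  have "g p0 \<le> g u" for u
  proof -
    obtain y z where yz: "y \<in> span K" "\<And>w. w \<in> span K \<Longrightarrow> orthogonal z w" "u = y + z"
      using orthogonal_subspace_decomp_exists[of K u] by metis
    have yK: "y \<in> K" using yz(1) subK by (metis span_eq_iff)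
    have zP: "z \<in> P" unfolding P_def orthogonal_comp_def
      using yz(2) span_base orthogonal_commute by blast
    have gu: "g u = g z" using inv[of y z] yK yz(3) unfolding K_def by (simp add: add.commute)
    show ?thesis
    proof (cases "norm z \<le> R")
      case True
      then have "z \<in> T" unfolding T_def using zP by simp
      then show ?thesis using p0 gu by simp
    next
      case False
      have "c * R < c * norm z" using False c by simp
      also have "\<dots> \<le> h z" using c zP by simp
      also have "\<dots> \<le> a + N * g z" using coer unfolding h_def by simp
      finally have "N * g 0 < N * g z" unfolding R_def using c by simp
      then have "g 0 < g z" using N
        by (metis mult_left_mono not_less)
      moreover have "g p0 \<le> g 0" using p0 \<open>0 \<in> T\<close> by simp
      ultimately show ?thesis using gu by simp
    qed
  qed
  then show ?thesis by blast
qed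



definition Jc where
  "Jc S A B x \<Psi> = (SUP \<sigma>\<in>signals S. (\<Sum>k. ennreal (norm (phi A B k \<sigma> x \<Psi>))))"

lemma Vfun_Jc: "Vfun S A B x = (INF \<Psi>. Jc S A B x \<Psi>)"
  unfolding Vfun_def Jc_def by (rule refl)

lemma ennreal_suminf_head: "(\<Sum>k. f k) = (f 0::ennreal) + (\<Sum>k. f (Suc k))"
  by (metis add.commute summableI summable_sums sums_Suc sums_unique)

lemma sum_shift:
  "(\<Sum>k. ennreal (norm (phi A B k \<sigma> x \<Psi>))) = ennreal (norm x) +
    (\<Sum>k. ennreal (norm (phi A B k (\<sigma> \<circ> Suc) (A (\<sigma> 0) *v x + B (\<sigma> 0) *v \<Psi> [x] [])
      (\<lambda>h ms. \<Psi> (h @ [x]) (ms @ [\<sigma> 0])))))"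
  unfolding ennreal_suminf_head[of "\<lambda>k. ennreal (norm (phi A B k \<sigma> x \<Psi>))"] phi_shift phi_0 ..

lemma signals_Suc: "\<sigma> \<in> signals S \<Longrightarrow> \<sigma> \<circ> Suc \<in> signals S"
  by (simp add: signals_def)

lemma signals_ne: "S \<noteq> {} \<Longrightarrow> signals S \<noteq> {}"
proof -
  assume "S \<noteq> {}" then obtain i where "i \<in> S" by blast
  then have "(\<lambda>_. i) \<in> signals S" by (simp add: signals_def)
  then show ?thesis by blast
qed

lemma V_bound:
  fixes S :: "'i set" and A :: "'i \<Rightarrow> real^'n^'n" and B :: "'i \<Rightarrow> real^'m^'n"
  assumes "IFS_m S A B"
  shows "\<exists>C\<ge>0. \<forall>x. Vfun S A B x \<le> ennreal (C * norm x)"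
proof -
  obtain \<Psi> :: "(real^'n) list \<Rightarrow> 'i list \<Rightarrow> real^'m" and M \<gamma> where
    H: "M > 0" "0 \<le> \<gamma>" "\<gamma> < 1" "\<And>x0 \<sigma> k. \<sigma> \<in> signals S \<Longrightarrow> norm (phi A B k \<sigma> x0 \<Psi>) \<le> M * \<gamma> ^ k * norm x0"
    using assms unfolding IFS_m_def by blast
  define C where "C = M / (1 - \<gamma>)"
  have C0: "C \<ge> 0" unfolding C_def using H by simp
  have "Vfun S A B x \<le> ennreal (C * norm x)" for x
  proof -
    have gs: "(\<lambda>k. (M * norm x) * \<gamma> ^ k) sums ((M * norm x) * (1 / (1 - \<gamma>)))"
      by (intro sums_mult geometric_sums) (use H in simp)
    have gs': "(\<lambda>k. M * \<gamma> ^ k * norm x) sums (C * norm x)"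
      using gs unfolding C_def by (simp add: ac_simps)
    have "Jc S A B x \<Psi> \<le> ennreal (C * norm x)"
      unfolding Jc_def
    proof (rule SUP_least)
      fix \<sigma> assume s: "\<sigma> \<in> signals S"
      have "(\<Sum>k. ennreal (norm (phi A B k \<sigma> x \<Psi>))) \<le> (\<Sum>k. ennreal (M * \<gamma> ^ k * norm x))"
        by (rule suminf_le) (auto intro!: ennreal_leI H(4) s)
      also have "\<dots> = ennreal (\<Sum>k. M * \<gamma> ^ k * norm x)"
        by (intro suminf_ennreal2 sums_summable[OF gs']) (use H in simp)
      also have "\<dots> = ennreal (C * norm x)" using sums_unique[OF gs'] by simp
      finally show "(\<Sum>k. ennreal (norm (phi A B k \<sigma> x \<Psi>))) \<le> ennreal (C * norm x)" .
    qed
    then show ?thesis unfolding Vfun_Jc by (meson INF_lower2 UNIV_I)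
  qed
  then show ?thesis using C0 by blast
qed

lemma V_lower:
  fixes S :: "'i set" and A :: "'i \<Rightarrow> real^'n^'n" and B :: "'i \<Rightarrow> real^'m^'n"
  assumes "S \<noteq> {}"
  shows "ennreal (norm x) \<le> Vfun S A B x"
  unfolding Vfun_Jc
proof (rule INF_greatest)
  fix \<Psi> :: "(real^'n) list \<Rightarrow> 'i list \<Rightarrow> real^'m"
  obtain \<sigma> where s: "\<sigma> \<in> signals S" using signals_ne[OF assms] by blast
  have "ennreal (norm x) \<le> (\<Sum>k. ennreal (norm (phi A B k \<sigma> x \<Psi>)))"
    by (subst ennreal_suminf_head) simp
  also have "\<dots> \<le> Jc S A B x \<Psi>" unfolding Jc_def using s by (rule SUP_upper)
  finally show "ennreal (norm x) \<le> Jc S A B x \<Psi>" .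
qed



lemma Jc_open_loop:
  fixes S :: "'i set" and A :: "'i \<Rightarrow> real^'n^'n" and B :: "'i \<Rightarrow> real^'m^'n"
  shows "\<exists>G. Jc S A B x \<Psi> = Jc S A B x (\<lambda>h. G)"
proof -
  obtain G where G: "\<forall>\<sigma> k. hist A B \<sigma> x \<Psi> k = hist A B \<sigma> x (\<lambda>h. G) k"
    using open_loop by blast
  then have "\<And>\<sigma> k. phi A B k \<sigma> x \<Psi> = phi A B k \<sigma> x (\<lambda>h. G)" unfolding phi_def by simp
  then show ?thesis unfolding Jc_def by auto
qed

lemma V_subadd:
  fixes S :: "'i set" and A :: "'i \<Rightarrow> real^'n^'n" and B :: "'i \<Rightarrow> real^'m^'n"
  shows "Vfun S A B (x + y) \<le> Jc S A B x \<Psi>1 + Jc S A B y \<Psi>2"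
proof -
  obtain G1 where G1: "Jc S A B x \<Psi>1 = Jc S A B x (\<lambda>h. G1)" using Jc_open_loop by blast
  obtain G2 where G2: "Jc S A B y \<Psi>2 = Jc S A B y (\<lambda>h. G2)" using Jc_open_loop by blast
  have "Jc S A B (x + y) (\<lambda>h ms. G1 ms + G2 ms) \<le> Jc S A B x (\<lambda>h. G1) + Jc S A B y (\<lambda>h. G2)"
    unfolding Jc_def
  proof (rule SUP_least)
    fix \<sigma> assume s: "\<sigma> \<in> signals S"
    have "(\<Sum>k. ennreal (norm (phi A B k \<sigma> (x + y) (\<lambda>h ms. G1 ms + G2 ms))))
       \<le> (\<Sum>k. ennreal (norm (phi A B k \<sigma> x (\<lambda>h. G1))) + ennreal (norm (phi A B k \<sigma> y (\<lambda>h. G2))))"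
    proof (rule suminf_le)
      fix k
      show "ennreal (norm (phi A B k \<sigma> (x + y) (\<lambda>h ms. G1 ms + G2 ms)))
         \<le> ennreal (norm (phi A B k \<sigma> x (\<lambda>h. G1))) + ennreal (norm (phi A B k \<sigma> y (\<lambda>h. G2)))"
        unfolding open_loop_add by (simp add: ennreal_plus[symmetric] norm_triangle_ineq del: ennreal_plus)
    qed (rule summableI)+
    also have "\<dots> = (\<Sum>k. ennreal (norm (phi A B k \<sigma> x (\<lambda>h. G1)))) + (\<Sum>k. ennreal (norm (phi A B k \<sigma> y (\<lambda>h. G2))))"
      by (rule suminf_add[symmetric]) (rule summableI)+
    also have "\<dots> \<le> (SUP \<sigma>\<in>signals S. \<Sum>k. ennreal (norm (phi A B k \<sigma> x (\<lambda>h. G1))))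
                 + (SUP \<sigma>\<in>signals S. \<Sum>k. ennreal (norm (phi A B k \<sigma> y (\<lambda>h. G2))))"
      by (intro add_mono SUP_upper s)
    finally show "(\<Sum>k. ennreal (norm (phi A B k \<sigma> (x + y) (\<lambda>h ms. G1 ms + G2 ms)))) \<le> \<dots>" .
  qed
  moreover have "Vfun S A B (x + y) \<le> Jc S A B (x + y) (\<lambda>h ms. G1 ms + G2 ms)"
    unfolding Vfun_Jc by (rule INF_lower) simp
  ultimately show ?thesis using G1 G2 by simp
qed

context
  fixes S :: "'i set" and A :: "'i \<Rightarrow> real^'n^'n" and B :: "'i \<Rightarrow> real^'m^'n"
  assumes fin: "finite S" and ne: "S \<noteq> {}" and ifs: "IFS_m S A B"
begin

definition "vv x = enn2real (Vfun S A B x)"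

lemma C_ex: "\<exists>C\<ge>0. \<forall>x. Vfun S A B x \<le> ennreal (C * norm x)"
  by (rule V_bound[OF ifs])

definition "CC = (SOME C. C \<ge> 0 \<and> (\<forall>x. Vfun S A B x \<le> ennreal (C * norm x)))"

lemma CC: "CC \<ge> 0" "Vfun S A B x \<le> ennreal (CC * norm x)"
  using someI_ex[OF C_ex] unfolding CC_def by auto

lemma Vfin: "Vfun S A B x = ennreal (vv x)"
proof -
  have "Vfun S A B x < top" using CC(2)[of x] by (simp add: le_less_trans)
  then show ?thesis unfolding vv_def by (metis enn2real_nonneg ennreal_enn2real_if less_top not_less_iff_gr_or_eq)
qed

lemma vv_nonneg: "vv x \<ge> 0" unfolding vv_def by simp

lemma vv_ge: "norm x \<le> vv x"
  using V_lower[OF ne, of x A B] Vfin[of x] by (simp add: ennreal_le_iff vv_nonneg)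

lemma vv_le: "vv x \<le> CC * norm x"
  using CC(2)[of x] Vfin[of x] CC(1) by (simp add: ennreal_le_iff)

lemma exists_good: "e > 0 \<Longrightarrow> \<exists>\<Psi>. Jc S A B x \<Psi> < ennreal (vv x + e)"
proof -
  assume e: "e > 0"
  have "Vfun S A B x < ennreal (vv x + e)" unfolding Vfin using e vv_nonneg[of x]
    by (intro ennreal_lessI) auto
  then show ?thesis unfolding Vfun_Jc by (simp add: INF_less_iff)
qed

lemma vv_subadd: "vv (x + y) \<le> vv x + vv y"
proof (rule field_le_epsilon)
  fix e :: real assume e: "e > 0"
  obtain \<Psi>1 where 1: "Jc S A B x \<Psi>1 < ennreal (vv x + e/2)" using exists_good e by (meson half_gt_zero)
  obtain \<Psi>2 where 2: "Jc S A B y \<Psi>2 < ennreal (vv y + e/2)" using exists_good e by (meson half_gt_zero)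
  have "ennreal (vv (x + y)) \<le> Jc S A B x \<Psi>1 + Jc S A B y \<Psi>2"
    using V_subadd[of S A B x y \<Psi>1 \<Psi>2] Vfin by simp
  also have "\<dots> \<le> ennreal (vv x + e/2) + ennreal (vv y + e/2)"
    using 1 2 by (intro add_mono) auto
  also have "\<dots> = ennreal (vv x + vv y + e)"
    using vv_nonneg[of x] vv_nonneg[of y] e by (simp add: ennreal_plus[symmetric] del: ennreal_plus)
  finally have f: "ennreal (vv (x + y)) \<le> ennreal (vv x + vv y + e)" .
  have nn: "0 \<le> vv x + vv y + e" using vv_nonneg[of x] vv_nonneg[of y] e by simp
  show "vv (x + y) \<le> vv x + vv y + e" using f ennreal_le_iff[OF nn] by blast
qed

lemma vv_lip: "CC-lipschitz_on UNIV vv"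
  unfolding lipschitz_on_def
proof (intro conjI ballI CC(1))
  fix x y :: "real^'n"
  have a: "vv x \<le> vv y + CC * norm (x - y)"
    using vv_subadd[of y "x - y"] vv_le[of "x - y"] by simp
  have b: "vv y \<le> vv x + CC * norm (x - y)"
    using vv_subadd[of x "y - x"] vv_le[of "y - x"] by (simp add: norm_minus_commute)
  show "dist (vv x) (vv y) \<le> CC * dist x y"
    using a b by (simp add: dist_real_def dist_norm abs_le_iff)
qed

lemma vv_cont: "continuous_on UNIV vv"
  by (rule lipschitz_on_continuous_on[OF vv_lip])


definition "gg x u = Max ((\<lambda>i. vv (A i *v x + B i *v u)) ` S)"

lemma gg_ge: "i \<in> S \<Longrightarrow> vv (A i *v x + B i *v u) \<le> gg x u"
  unfolding gg_def using fin by (intro Max_ge) auto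

lemma gg_in: "\<exists>i\<in>S. gg x u = vv (A i *v x + B i *v u)"
proof -
  have "gg x u \<in> (\<lambda>i. vv (A i *v x + B i *v u)) ` S"
    unfolding gg_def using fin ne by (intro Max_in) auto
  then show ?thesis by auto
qed

lemma gg_nonneg: "gg x u \<ge> 0"
  using gg_in[of x u] vv_nonneg by auto

lemma upper: "vv x \<le> norm x + gg x u"
proof (rule field_le_epsilon)
  fix e :: real assume e: "e > 0"
  have "\<forall>i\<in>S. \<exists>\<Psi>. Jc S A B (A i *v x + B i *v u) \<Psi> < ennreal (vv (A i *v x + B i *v u) + e)"
    using exists_good e by blast
  then obtain \<Psi>s where \<Psi>s: "\<And>i. i \<in> S \<Longrightarrow> Jc S A B (A i *v x + B i *v u) (\<Psi>s i) < ennreal (vv (A i *v x + B i *v u) + e)"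
    using bchoice by metis
  define \<Psi> where "\<Psi> h ms = (if ms = [] then u else \<Psi>s (last ms) (butlast h) (butlast ms))" for h ms
  have \<Psi>': "(\<lambda>h ms. \<Psi> (h @ [x]) (ms @ [i])) = \<Psi>s i" for i by (auto simp: \<Psi>_def fun_eq_iff)
  have \<Psi>0: "\<Psi> [x] [] = u" by (simp add: \<Psi>_def)
  have "Jc S A B x \<Psi> \<le> ennreal (norm x + gg x u + e)"
    unfolding Jc_def
  proof (rule SUP_least)
    fix \<sigma> assume s: "\<sigma> \<in> signals S"
    define i where "i = \<sigma> 0"
    have i: "i \<in> S" using s unfolding signals_def i_def by auto
    have "(\<Sum>k. ennreal (norm (phi A B k \<sigma> x \<Psi>))) = ennreal (norm x) +
       (\<Sum>k. ennreal (norm (phi A B k (\<sigma> \<circ> Suc) (A i *v x + B i *v u) (\<Psi>s i))))"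
      using sum_shift[of A B \<sigma> x \<Psi>] unfolding \<Psi>0 \<Psi>' i_def .
    also have "\<dots> \<le> ennreal (norm x) + Jc S A B (A i *v x + B i *v u) (\<Psi>s i)"
      unfolding Jc_def by (intro add_mono order_refl SUP_upper signals_Suc s)
    also have "\<dots> \<le> ennreal (norm x) + ennreal (vv (A i *v x + B i *v u) + e)"
      using \<Psi>s[OF i] by (intro add_mono) auto
    also have "\<dots> = ennreal (norm x + vv (A i *v x + B i *v u) + e)"
      using vv_nonneg e by (simp add: ennreal_plus[symmetric] add.assoc del: ennreal_plus)
    also have "\<dots> \<le> ennreal (norm x + gg x u + e)"
      using gg_ge[OF i, of x u] by (intro ennreal_leI) simp
    finally show "(\<Sum>k. ennreal (norm (phi A B k \<sigma> x \<Psi>))) \<le> ennreal (norm x + gg x u + e)" .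
  qed
  then have f: "ennreal (vv x) \<le> ennreal (norm x + gg x u + e)"
    unfolding Vfin[symmetric] Vfun_Jc by (meson INF_lower2 UNIV_I)
  have nn: "0 \<le> norm x + gg x u + e" using gg_nonneg[of x u] e by simp
  show "vv x \<le> norm x + gg x u + e" using f ennreal_le_iff[OF nn] by blast
qed

lemma lower: "ennreal (norm x + gg x (\<Psi> [x] [])) \<le> Jc S A B x \<Psi>"
proof -
  define u where "u = \<Psi> [x] []"
  obtain i where i: "i \<in> S" "gg x u = vv (A i *v x + B i *v u)" using gg_in by blast
  define \<Psi>' where "\<Psi>' = (\<lambda>h ms. \<Psi> (h @ [x]) (ms @ [i]))"
  have "ennreal (norm x + gg x u) = ennreal (norm x) + Vfun S A B (A i *v x + B i *v u)"
    using i(2) Vfin vv_nonneg by (simp add: ennreal_plus)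
  also have "\<dots> \<le> ennreal (norm x) + Jc S A B (A i *v x + B i *v u) \<Psi>'"
    unfolding Vfun_Jc by (intro add_mono order_refl INF_lower) simp
  also have "\<dots> = (SUP \<sigma>'\<in>signals S. ennreal (norm x) + (\<Sum>k. ennreal (norm (phi A B k \<sigma>' (A i *v x + B i *v u) \<Psi>'))))"
    unfolding Jc_def by (rule ennreal_SUP_add_right[OF signals_ne[OF ne]])
  also have "\<dots> \<le> Jc S A B x \<Psi>"
  proof (rule SUP_least)
    fix \<sigma>' assume s': "\<sigma>' \<in> signals S"
    define \<sigma> where "\<sigma> = case_nat i \<sigma>'"
    have s: "\<sigma> \<in> signals S" using s' i(1) unfolding signals_def \<sigma>_def by (auto split: nat.split)
    have e1: "\<sigma> 0 = i" "\<sigma> \<circ> Suc = \<sigma>'" by (auto simp: \<sigma>_def fun_eq_iff)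
    have "ennreal (norm x) + (\<Sum>k. ennreal (norm (phi A B k \<sigma>' (A i *v x + B i *v u) \<Psi>')))
        = (\<Sum>k. ennreal (norm (phi A B k \<sigma> x \<Psi>)))"
      using sum_shift[of A B \<sigma> x \<Psi>] unfolding e1 u_def \<Psi>'_def by simp
    also have "\<dots> \<le> Jc S A B x \<Psi>" unfolding Jc_def using s by (rule SUP_upper)
    finally show "ennreal (norm x) + (\<Sum>k. ennreal (norm (phi A B k \<sigma>' (A i *v x + B i *v u) \<Psi>'))) \<le> Jc S A B x \<Psi>" .
  qed
  finally show ?thesis unfolding u_def .
qed

lemma Max_eq: "Max ((\<lambda>i. Vfun S A B (A i *v x + B i *v u)) ` S) = ennreal (gg x u)"
proof -
  have "ennreal (gg x u) = Max (ennreal ` (\<lambda>i. vv (A i *v x + B i *v u)) ` S)"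
    unfolding gg_def using fin ne by (intro mono_Max_commute) (auto simp: mono_def intro: ennreal_leI)
  also have "\<dots> = Max ((\<lambda>i. Vfun S A B (A i *v x + B i *v u)) ` S)"
    unfolding image_image Vfin ..
  finally show ?thesis by simp
qed

lemma gg_cont: "continuous_on UNIV (gg x)"
proof -
  have "continuous_on UNIV (\<lambda>u. Max ((\<lambda>i. vv (A i *v x + B i *v u)) ` S))"
  proof (rule cont_Max[OF fin ne])
    fix i
    show "continuous_on UNIV (\<lambda>u. vv (A i *v x + B i *v u))"
      by (rule continuous_on_compose2[OF vv_cont])
         (auto intro!: continuous_on_add continuous_on_const matrix_vector_mult_linear_continuous_on)
  qed
  then show ?thesis unfolding gg_def[abs_def] by simp
qed

lemma main_x: "\<exists>u0. (\<forall>u. Max ((\<lambda>i. Vfun S A B (A i *v x + B i *v u0)) ` S)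
                \<le> Max ((\<lambda>i. Vfun S A B (A i *v x + B i *v u)) ` S))
         \<and> Vfun S A B x = ennreal (norm x) + Max ((\<lambda>i. Vfun S A B (A i *v x + B i *v u0)) ` S)"
proof -
  have inv: "gg x (u + k) = gg x u" if "\<forall>i\<in>S. B i *v k = 0" for u k
  proof -
    have "(\<lambda>i. vv (A i *v x + B i *v (u + k))) ` S = (\<lambda>i. vv (A i *v x + B i *v u)) ` S"
      using that by (intro image_cong) (auto simp: matrix_vector_right_distrib)
    then show ?thesis unfolding gg_def by simp
  qed
  have coer: "(\<Sum>i\<in>S. norm (B i *v u)) \<le> (\<Sum>i\<in>S. norm (A i *v x)) + real (card S) * gg x u" for u
  proof -
    have "(\<Sum>i\<in>S. norm (B i *v u)) \<le> (\<Sum>i\<in>S. norm (A i *v x) + gg x u)"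
    proof (rule sum_mono)
      fix i assume i: "i \<in> S"
      have "norm (B i *v u) \<le> norm (A i *v x + B i *v u) + norm (A i *v x)"
        by (metis add_diff_cancel_left' norm_triangle_ineq4)
      also have "\<dots> \<le> vv (A i *v x + B i *v u) + norm (A i *v x)" using vv_ge by simp
      also have "\<dots> \<le> gg x u + norm (A i *v x)" using gg_ge[OF i] by simp
      finally show "norm (B i *v u) \<le> norm (A i *v x) + gg x u" by simp
    qed
    also have "\<dots> = (\<Sum>i\<in>S. norm (A i *v x)) + real (card S) * gg x u"
      by (simp add: sum.distrib)
    finally show ?thesis .
  qed
  obtain u0 where u0: "\<And>u. gg x u0 \<le> gg x u"
    using exists_min[OF fin gg_cont inv coer] by auto
  have up: "vv x \<le> norm x + gg x u0" by (rule upper)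
  have "ennreal (norm x + gg x u0) \<le> Vfun S A B x"
    unfolding Vfun_Jc
  proof (rule INF_greatest)
    fix \<Psi> :: "(real^'n) list \<Rightarrow> 'i list \<Rightarrow> real^'m"
    have "ennreal (norm x + gg x u0) \<le> ennreal (norm x + gg x (\<Psi> [x] []))"
      using u0 by (intro ennreal_leI) simp
    also have "\<dots> \<le> Jc S A B x \<Psi>" by (rule lower)
    finally show "ennreal (norm x + gg x u0) \<le> Jc S A B x \<Psi>" .
  qed
  then have lo: "norm x + gg x u0 \<le> vv x"
    unfolding Vfin ennreal_le_iff2 using vv_nonneg[of x] by auto
  have "Vfun S A B x = ennreal (norm x) + ennreal (gg x u0)"
    unfolding Vfin using up lo gg_nonneg by (simp add: ennreal_plus[symmetric] del: ennreal_plus)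
  then show ?thesis using u0 unfolding Max_eq by (intro exI[of _ u0]) (auto intro: ennreal_leI)
qed

end


theorem mainTheorem4:
  fixes S :: "'i set"
    and A :: "'i \<Rightarrow> real^'n^'n"
    and B :: "'i \<Rightarrow> real^'m^'n"
  assumes "finite S" and "S \<noteq> {}"
    and "IFS_m S A B"
  shows "\<forall>x :: real^'n. \<exists>u0 :: real^'m.
           (\<forall>u. Max ((\<lambda>i. Vfun S A B (A i *v x + B i *v u0)) ` S)
                \<le> Max ((\<lambda>i. Vfun S A B (A i *v x + B i *v u)) ` S))
         \<and> Vfun S A B x = ennreal (norm x) + Max ((\<lambda>i. Vfun S A B (A i *v x + B i *v u0)) ` S)"
  using main_x[OF assms] by blast

end
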